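(* Let $N\ge3$, $N=2g+1$ or $2g+2$ with $g\ge1$. On the $(2g+1)$-dimensional space with coordinates $(\lambda_1,\dots,\lambda_g,z_1,\dots,z_g,v)$ (with $\lambda_j$ pairwise distinct and nonzero) consider the Poisson brackets $$\{\lambda_j,z_k\}=\delta_{jk}z_k,\quad \{\lambda_j,\lambda_k\}=\{z_j,z_k\}=\{\lambda_j,v\}=\{z_j,v\}=0.$$ Put $b_0=1,\tilde a_0=0$ if $N=2g+1$ and $b_0=v,\tilde a_0=1$ if $N=2g+2$, and define $$B(\lambda)=b_0\prod_{j=1}^g(\lambda-\lambda_j),\qquad \tilde A(\lambda)=\Bigl(\frac{\tilde a_0}{b_0}+\sum_{j=1}^g\frac{z_j}{B'(\lambda_j)(\lambda-\lambda_j)\lambda_j}\Bigr)B(\lambda).$$ Then, for independent parameters $\lambda,\mu$, $$\{\tilde A(\lambda),\tilde A(\mu)\}=\{B(\lambda),B(\mu)\}=0,\qquad \{\tilde A(\lambda),B(\mu)\}=\frac{B(\lambda)\tilde A(\mu)-\tilde A(\lambda)B(\mu)}{\lambda-\mu}.$$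
   Context: $B'(\lambda_j)=b_0\prod_{k\ne j}(\lambda_j-\lambda_k)$. $\tilde A$ is the unique polynomial of degree $\le g$ with leading coefficient $\tilde a_0$ at $\lambda^g$ and $\tilde A(\lambda_j)\lambda_j=z_j$. Brackets of polynomials in $\lambda$ are taken coefficientwise. *)

theory Defs
  imports "HOL-Analysis.Analysis"
begin

text \<open>A phase-space point is (l, z, v): l j = lambda_j, z j = z_j for j in {1..g}.
  Observables are functions F l z v.\<close>

type_synonym obs = "(nat \<Rightarrow> real) \<Rightarrow> (nat \<Rightarrow> real) \<Rightarrow> real \<Rightarrow> real"

definition dlam :: "obs \<Rightarrow> nat \<Rightarrow> obs" where
  "dlam F j l z v = deriv (\<lambda>t. F (l(j := t)) z v) (l j)"

definition dz :: "obs \<Rightarrow> nat \<Rightarrow> obs" where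
  "dz F j l z v = deriv (\<lambda>t. F l (z(j := t)) v) (z j)"

text \<open>Poisson bracket determined by {lambda_j, z_k} = delta_jk z_k, all other
  coordinate brackets zero, extended by the Leibniz rule:
  {F,G} = sum_j z_j (dF/dlambda_j dG/dz_j - dF/dz_j dG/dlambda_j).\<close>
definition pbr :: "nat \<Rightarrow> obs \<Rightarrow> obs \<Rightarrow> obs" where
  "pbr g F G l z v = (\<Sum>j=1..g. z j * (dlam F j l z v * dz G j l z v - dz F j l z v * dlam G j l z v))"

definition b0 :: "nat \<Rightarrow> nat \<Rightarrow> real \<Rightarrow> real" where
  "b0 N g v = (if N = 2*g+1 then 1 else v)"

definition a0t :: "nat \<Rightarrow> nat \<Rightarrow> real" where
  "a0t N g = (if N = 2*g+1 then 0 else 1)"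

definition Bpoly :: "nat \<Rightarrow> nat \<Rightarrow> real \<Rightarrow> obs" where
  "Bpoly N g x l z v = b0 N g v * (\<Prod>j=1..g. (x - l j))"

text \<open>B'(lambda_j) = b0 prod_{k \<noteq> j} (lambda_j - lambda_k)\<close>
definition Bder :: "nat \<Rightarrow> nat \<Rightarrow> nat \<Rightarrow> obs" where
  "Bder N g j l z v = b0 N g v * (\<Prod>k\<in>{1..g}-{j}. (l j - l k))"

text \<open>B(x)/(x - lambda_j), written as the polynomial b0 prod_{k \<noteq> j} (x - lambda_k)\<close>
definition Bquot :: "nat \<Rightarrow> nat \<Rightarrow> nat \<Rightarrow> real \<Rightarrow> obs" where
  "Bquot N g j x l z v = b0 N g v * (\<Prod>k\<in>{1..g}-{j}. (x - l k))"

definition Atil :: "nat \<Rightarrow> nat \<Rightarrow> real \<Rightarrow> obs" where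
  "Atil N g x l z v = a0t N g / b0 N g v * Bpoly N g x l z v
     + (\<Sum>j=1..g. z j / (Bder N g j l z v * l j) * Bquot N g j x l z v)"

end

theory Submission
  imports Defs
begin

lemma Bquot_upd: "Bquot N g j x (l(j:=t)) z v = Bquot N g j x l z v"
  unfolding Bquot_def by (auto intro!: prod.cong)

lemma Bder_upd: "Bder N g j (l(j:=t)) z v = b0 N g v * (\<Prod>k\<in>{1..g}-{j}. (t - l k))"
  unfolding Bder_def by (auto intro!: prod.cong)

lemma Bpoly_split: "j \<in> {1..g} \<Longrightarrow> Bpoly N g x l z v = (x - l j) * Bquot N g j x l z v"
  unfolding Bpoly_def Bquot_def
  using prod.remove[of "{1..g}" j "\<lambda>k. x - l k"] by simp

lemma dlam_Bpoly: "j \<in> {1..g} \<Longrightarrow> dlam (Bpoly N g x) j l z v = - Bquot N g j x l z v"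
proof -
  assume j: "j \<in> {1..g}"
  have "(\<lambda>t. Bpoly N g x (l(j:=t)) z v) = (\<lambda>t. (x - t) * Bquot N g j x l z v)"
    using Bpoly_split[OF j, of N x "l(j:=_)"] by (simp add: Bquot_upd)
  moreover have "((\<lambda>t. (x - t) * Bquot N g j x l z v) has_real_derivative - Bquot N g j x l z v) (at (l j))"
    by (auto intro!: derivative_eq_intros)
  ultimately show ?thesis unfolding dlam_def by (simp add: DERIV_imp_deriv)
qed

lemma dz_Bpoly: "dz (Bpoly N g x) j l z v = 0"
  unfolding dz_def Bpoly_def by (simp add: DERIV_imp_deriv)

lemma dz_Atil: assumes j: "j \<in> {1..g}"
  shows "dz (Atil N g x) j l z v = Bquot N g j x l z v / (Bder N g j l z v * l j)"
proof -
  let ?S = "{1..g} - {j}"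
  define K where "K = a0t N g / b0 N g v * Bpoly N g x l z v
     + (\<Sum>k\<in>?S. z k / (Bder N g k l z v * l k) * Bquot N g k x l z v)"
  have "(\<lambda>s. Atil N g x l (z(j:=s)) v) = (\<lambda>s. K + s * (Bquot N g j x l z v / (Bder N g j l z v * l j)))"
  proof
    fix s
    have "(\<Sum>k=1..g. (z(j:=s)) k / (Bder N g k l (z(j:=s)) v * l k) * Bquot N g k x l (z(j:=s)) v)
      = s / (Bder N g j l z v * l j) * Bquot N g j x l z v + (\<Sum>k\<in>?S. z k / (Bder N g k l z v * l k) * Bquot N g k x l z v)"
      apply (subst sum.remove[of "{1..g}" j])
      using j apply (simp_all add: Bder_def Bquot_def)
      done
    then show "Atil N g x l (z(j:=s)) v = K + s * (Bquot N g j x l z v / (Bder N g j l z v * l j))"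
      unfolding Atil_def K_def by (simp add: Bpoly_def)
  qed
  moreover have "((\<lambda>s. K + s * C) has_real_derivative C) (at (z j))" for C
    by (auto intro!: derivative_eq_intros)
  ultimately show ?thesis unfolding dz_def by (metis DERIV_imp_deriv)
qed

definition Cc :: "nat \<Rightarrow> nat \<Rightarrow> nat \<Rightarrow> (nat \<Rightarrow> real) \<Rightarrow> real" where
  "Cc g j k l = (\<Prod>m\<in>{1..g}-{k}-{j}. (l k - l m))"

definition Rr :: "nat \<Rightarrow> nat \<Rightarrow> nat \<Rightarrow> real \<Rightarrow> (nat \<Rightarrow> real) \<Rightarrow> real" where
  "Rr g j k x l = (\<Prod>m\<in>{1..g}-{k}-{j}. (x - l m))"

definition phi :: "nat \<Rightarrow> nat \<Rightarrow> nat \<Rightarrow> (nat \<Rightarrow> real) \<Rightarrow> (nat \<Rightarrow> real) \<Rightarrow> real \<Rightarrow> real \<Rightarrow> real" where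
  "phi N g j l z v t = - (a0t N g / b0 N g v) * t
     + z j / (b0 N g v * (\<Prod>m\<in>{1..g}-{j}. (t - l m)) * t)
     + (\<Sum>k\<in>{1..g}-{j}. z k / (b0 N g v * Cc g j k l * l k * (l k - t)))"

lemma term_k:
  assumes j: "j \<in> {1..g}" and k: "k \<in> {1..g}-{j}" and t: "t \<noteq> l k" and b: "b0 N g v \<noteq> 0"
  shows "z k / (Bder N g k (l(j:=t)) z v * l k) * Bquot N g k x (l(j:=t)) z v
    = z k / (Cc g j k l * l k) * Rr g j k x l + Bquot N g j x l z v * (z k / (b0 N g v * Cc g j k l * l k * (l k - t)))"
proof -
  have jk: "j \<in> {1..g} - {k}" using j k by auto
  have kj: "k \<in> {1..g} - {j}" using k by auto
  have e1: "Bder N g k (l(j:=t)) z v = b0 N g v * (l k - t) * Cc g j k l"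
    unfolding Bder_def Cc_def
    using prod.remove[of "{1..g}-{k}" j "\<lambda>m. (l(j:=t)) k - (l(j:=t)) m"] jk k
    by (auto intro!: prod.cong)
  have e2: "Bquot N g k x (l(j:=t)) z v = b0 N g v * (x - t) * Rr g j k x l"
    unfolding Bquot_def Rr_def
    using prod.remove[of "{1..g}-{k}" j "\<lambda>m. x - (l(j:=t)) m"] jk k
    by (auto intro!: prod.cong)
  have s: "{1..g} - {j} - {k} = {1..g} - {k} - {j}" by auto
  have e3: "Bquot N g j x l z v = b0 N g v * (x - l k) * Rr g j k x l"
    unfolding Bquot_def Rr_def
    using prod.remove[of "{1..g}-{j}" k "\<lambda>m. x - l m"] kj s
    by auto
  show ?thesis
  proof (cases "Cc g j k l * l k = 0")
    case True
    then show ?thesis unfolding e1 e2 e3 by auto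
  next
    case False
    then have "Cc g j k l \<noteq> 0" "l k \<noteq> 0" by auto
    moreover have "l k - t \<noteq> 0" using t by auto
    ultimately show ?thesis unfolding e1 e2 e3 using b
      by (simp add: field_simps)
  qed
qed

lemma decomp:
  assumes j: "j \<in> {1..g}" and t: "\<forall>k\<in>{1..g}-{j}. t \<noteq> l k" and b: "b0 N g v \<noteq> 0"
  shows "Atil N g x (l(j:=t)) z v = (a0t N g / b0 N g v * x * Bquot N g j x l z v
      + (\<Sum>k\<in>{1..g}-{j}. z k / (Cc g j k l * l k) * Rr g j k x l))
      + Bquot N g j x l z v * phi N g j l z v t"
proof -
  let ?S = "{1..g} - {j}"
  let ?Q = "Bquot N g j x l z v"
  have bp: "Bpoly N g x (l(j:=t)) z v = (x - t) * ?Q"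
    using Bpoly_split[OF j, of N x "l(j:=t)"] by (simp add: Bquot_upd)
  have sm: "(\<Sum>k=1..g. (z k / (Bder N g k (l(j:=t)) z v * (l(j:=t)) k) * Bquot N g k x (l(j:=t)) z v))
     = z j / (b0 N g v * (\<Prod>m\<in>?S. (t - l m)) * t) * ?Q
       + (\<Sum>k\<in>?S. z k / (Cc g j k l * l k) * Rr g j k x l + ?Q * (z k / (b0 N g v * Cc g j k l * l k * (l k - t))))"
    apply (subst sum.remove[of "{1..g}" j])
    using j apply (simp_all add: Bder_upd Bquot_upd)
    apply (intro sum.cong refl)
    using term_k[OF j _ _ b] t by auto
  show ?thesis
    unfolding Atil_def bp sm phi_def sum.distrib sum_distrib_left[symmetric]
    using b by (simp add: algebra_simps)
qed

lemma phi_diff: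
  assumes j: "j \<in> {1..g}" and b: "b0 N g v \<noteq> 0"
    and d: "\<forall>j\<in>{1..g}. \<forall>k\<in>{1..g}. j \<noteq> k \<longrightarrow> l j \<noteq> l k"
    and nz: "\<forall>j\<in>{1..g}. l j \<noteq> 0"
  shows "phi N g j l z v differentiable at (l j)"
proof -
  let ?S = "{1..g} - {j}"
  have P: "(\<lambda>t. \<Prod>m\<in>?S. (t - l m)) differentiable at (l j)"
    unfolding differentiable_def
    by (rule exI, rule has_derivative_prod, auto intro!: derivative_intros)
  have P0: "(\<Prod>m\<in>?S. (l j - l m)) \<noteq> 0" using d j by auto
  have C0: "Cc g j k l \<noteq> 0" if "k \<in> ?S" for k
    unfolding Cc_def using d that by auto
  have "(\<lambda>t. z j / (b0 N g v * (\<Prod>m\<in>?S. (t - l m)) * t)) differentiable at (l j)"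
    using P P0 b nz j by (auto intro!: derivative_intros)
  moreover have "(\<lambda>t. \<Sum>k\<in>?S. z k / (b0 N g v * Cc g j k l * l k * (l k - t))) differentiable at (l j)"
    using C0 b nz d j by (auto intro!: derivative_intros)
  ultimately show ?thesis unfolding phi_def using b by (auto intro!: derivative_intros)
qed

lemma dlam_Atil:
  assumes j: "j \<in> {1..g}" and b: "b0 N g v \<noteq> 0"
    and d: "\<forall>j\<in>{1..g}. \<forall>k\<in>{1..g}. j \<noteq> k \<longrightarrow> l j \<noteq> l k"
    and nz: "\<forall>j\<in>{1..g}. l j \<noteq> 0"
  shows "dlam (Atil N g x) j l z v = deriv (phi N g j l z v) (l j) * Bquot N g j x l z v"
proof -
  let ?S = "{1..g} - {j}"
  define E where "E = a0t N g / b0 N g v * x * Bquot N g j x l z v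
      + (\<Sum>k\<in>{1..g}-{j}. z k / (Cc g j k l * l k) * Rr g j k x l)"
  define Q where "Q = Bquot N g j x l z v"
  define U where "U = - (l ` ?S)"
  have "open U" unfolding U_def by (intro open_Compl finite_imp_closed) auto
  moreover have "l j \<in> U" unfolding U_def
  proof
    assume "l j \<in> l ` ?S"
    then obtain m where "m \<in> ?S" "l j = l m" by blast
    with d j show False by (metis DiffD1 DiffD2 singletonI)
  qed
  ultimately have ev: "eventually (\<lambda>t. t \<in> U) (nhds (l j))"
    by (rule eventually_nhds_in_open)
  have "eventually (\<lambda>t. Atil N g x (l(j:=t)) z v = E + Q * phi N g j l z v t) (nhds (l j))"
    using ev
  proof (rule eventually_mono)
    fix t assume "t \<in> U"
    then have "\<forall>k\<in>?S. t \<noteq> l k" unfolding U_def by auto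
    then show "Atil N g x (l(j:=t)) z v = E + Q * phi N g j l z v t"
      using decomp[OF j _ b] unfolding E_def Q_def by blast
  qed
  then have "deriv (\<lambda>t. Atil N g x (l(j:=t)) z v) (l j) = deriv (\<lambda>t. E + Q * phi N g j l z v t) (l j)"
    by (rule deriv_cong_ev) simp
  moreover have "((\<lambda>t. E + Q * phi N g j l z v t) has_real_derivative Q * deriv (phi N g j l z v) (l j)) (at (l j))"
    using phi_diff[OF j b d nz] unfolding DERIV_deriv_iff_real_differentiable[symmetric]
    by (auto intro!: derivative_eq_intros)
  ultimately show ?thesis unfolding dlam_def Q_def
    by (metis DERIV_imp_deriv mult.commute)
qed

theorem mainTheorem7:
  fixes N g :: nat and l z :: "nat \<Rightarrow> real" and v lam mu :: real
  assumes "N \<ge> 3" and "g \<ge> 1" and "N = 2*g+1 \<or> N = 2*g+2"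
    and "\<forall>j\<in>{1..g}. \<forall>k\<in>{1..g}. j \<noteq> k \<longrightarrow> l j \<noteq> l k"
    and "\<forall>j\<in>{1..g}. l j \<noteq> 0"
    and "N = 2*g+2 \<longrightarrow> v \<noteq> 0"
  shows "pbr g (Atil N g lam) (Atil N g mu) l z v = 0
       \<and> pbr g (Bpoly N g lam) (Bpoly N g mu) l z v = 0
       \<and> (lam \<noteq> mu \<longrightarrow> pbr g (Atil N g lam) (Bpoly N g mu) l z v
            = (Bpoly N g lam l z v * Atil N g mu l z v - Atil N g lam l z v * Bpoly N g mu l z v) / (lam - mu))"
proof -
  note d = assms(4) and nz = assms(5)
  have b: "b0 N g v \<noteq> 0" using assms(3,6) unfolding b0_def by auto
  let ?c = "\<lambda>j. deriv (phi N g j l z v) (l j)"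
  let ?D = "\<lambda>j. Bder N g j l z v * l j"
  let ?Q = "\<lambda>j x. Bquot N g j x l z v"
  have p1: "pbr g (Atil N g lam) (Atil N g mu) l z v = 0"
    unfolding pbr_def
  proof (rule sum.neutral, rule ballI)
    fix j assume j: "j \<in> {1..g}"
    show "z j * (dlam (Atil N g lam) j l z v * dz (Atil N g mu) j l z v -
           dz (Atil N g lam) j l z v * dlam (Atil N g mu) j l z v) = 0"
      unfolding dlam_Atil[OF j b d nz] dz_Atil[OF j] by simp
  qed
  have p2: "pbr g (Bpoly N g lam) (Bpoly N g mu) l z v = 0"
    unfolding pbr_def dz_Bpoly by simp
  have p3l: "pbr g (Atil N g lam) (Bpoly N g mu) l z v
      = (\<Sum>j=1..g. z j / ?D j * (?Q j lam * ?Q j mu))"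
    unfolding pbr_def
  proof (rule sum.cong[OF refl])
    fix j assume j: "j \<in> {1..g}"
    show "z j * (dlam (Atil N g lam) j l z v * dz (Bpoly N g mu) j l z v -
           dz (Atil N g lam) j l z v * dlam (Bpoly N g mu) j l z v) = z j / ?D j * (?Q j lam * ?Q j mu)"
      unfolding dz_Bpoly dlam_Bpoly[OF j] dz_Atil[OF j] by simp
  qed
  have key: "\<And>k. k \<in> {1..g} \<Longrightarrow> Bpoly N g lam l z v * ?Q k mu - ?Q k lam * Bpoly N g mu l z v
      = (lam - mu) * (?Q k lam * ?Q k mu)"
  proof -
    fix k assume k: "k \<in> {1..g}"
    show "Bpoly N g lam l z v * ?Q k mu - ?Q k lam * Bpoly N g mu l z v
      = (lam - mu) * (?Q k lam * ?Q k mu)"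
      unfolding Bpoly_split[OF k, of N lam] Bpoly_split[OF k, of N mu] by (simp add: algebra_simps)
  qed
  have rhs: "Bpoly N g lam l z v * Atil N g mu l z v - Atil N g lam l z v * Bpoly N g mu l z v
      = (lam - mu) * (\<Sum>j=1..g. z j / ?D j * (?Q j lam * ?Q j mu))"
  proof -
    have "Bpoly N g lam l z v * Atil N g mu l z v - Atil N g lam l z v * Bpoly N g mu l z v
      = (\<Sum>k=1..g. z k / ?D k * (Bpoly N g lam l z v * ?Q k mu - ?Q k lam * Bpoly N g mu l z v))"
      unfolding Atil_def by (simp add: algebra_simps sum_distrib_left sum_distrib_right sum_subtractf)
    also have "\<dots> = (\<Sum>k=1..g. (lam - mu) * (z k / ?D k * (?Q k lam * ?Q k mu)))"
      by (rule sum.cong[OF refl]) (simp add: key)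
    finally show ?thesis by (simp add: sum_distrib_left)
  qed
  show ?thesis using p1 p2 p3l rhs by simp
qed

end
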